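(* Let $A$ be an associative (not necessarily unital) algebra over a field satisfying the identity $x_1\cdots x_n=x_{\sigma(1)}\cdots x_{\sigma(n)}$ for some $\sigma\in S_n$, and write $i=\sigma(1)$, $j=\sigma(n)$, where $i\ne 1$ and $j\ne n$. Then $H_{n+2}$ contains all permutations of $\{1,2,\ldots,i+1\}$ and all permutations of $\{j+1,\ldots,n+2\}$ (regarded as elements of $S_{n+2}$ fixing the remaining letters).
   Context: For each $k$, $H_k\subseteq S_k$ is the set of permutations $\tau$ such that $A$ satisfies $x_1\cdots x_k=x_{\tau(1)}\cdots x_{\tau(k)}$ (i.e. $a_1\cdots a_k=a_{\tau(1)}\cdots a_{\tau(k)}$ for all $a_1,\dots,a_k\in A$). *)

theory Defs
  imports Main "HOL.Modules" "HOL-Combinatorics.Permutations"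
begin

fun wprod :: "'a::semigroup_mult list \<Rightarrow> 'a" where
  "wprod [x] = x"
| "wprod (x # y # ys) = x * wprod (y # ys)"
| "wprod [] = undefined"

(* Associative (not necessarily unital) algebra over a field 'k:
   the carrier 'a is a (non-unital) ring, scale is a module structure,
   and multiplication is bilinear with respect to scale. *)
definition assoc_algebra :: "('k::field \<Rightarrow> 'a::ring \<Rightarrow> 'a) \<Rightarrow> bool" where
  "assoc_algebra scale \<longleftrightarrow> module scale \<and>
     (\<forall>c x y. scale c (x * y) = scale c x * y \<and> scale c (x * y) = x * scale c y)"

definition satisfies_perm_id :: "'a::semigroup_mult itself \<Rightarrow> nat \<Rightarrow> (nat \<Rightarrow> nat) \<Rightarrow> bool" where
  "satisfies_perm_id _ k \<tau> \<longleftrightarrow>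
     (\<forall>a :: nat \<Rightarrow> 'a. wprod (map a [1..<k+1]) = wprod (map (\<lambda>m. a (\<tau> m)) [1..<k+1]))"

definition H :: "'a::semigroup_mult itself \<Rightarrow> nat \<Rightarrow> (nat \<Rightarrow> nat) set" where
  "H A k = {\<tau>. \<tau> permutes {1..k} \<and> satisfies_perm_id A k \<tau>}"

end

theory Submission
  imports Defs
begin

lemma len2: "2 \<le> length w \<Longrightarrow> \<exists>u v w'. w = u # v # w'"
  by (cases w; cases "tl w") auto

lemma wprod_Cons: "xs \<noteq> [] \<Longrightarrow> wprod (x # xs) = x * wprod xs"
  by (cases xs) auto

lemma wprod_append: "xs \<noteq> [] \<Longrightarrow> ys \<noteq> [] \<Longrightarrow> wprod (xs @ ys) = wprod xs * wprod ys"
  by (induction xs rule: wprod.induct) (auto simp: mult.assoc wprod_Cons)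

lemma wprod_merge: "wprod (P @ (u * v) # R) = wprod (P @ u # v # R)"
proof (induction P)
  case Nil
  then show ?case by (cases R) (auto simp: mult.assoc)
next
  case (Cons p P)
  then show ?case by (simp add: wprod_Cons)
qed

context
  fixes f :: "'b list \<Rightarrow> 'c" and K :: nat
  assumes rot: "\<And>z w. length w + 1 = K \<Longrightarrow> f (z # w) = f (w @ [z])"
    and sw: "\<And>x y m. length m + 2 = K \<Longrightarrow> f (x # y # m) = f (y # x # m)"
begin

lemma rot_all: "length xs = K \<Longrightarrow> f (rotate k xs) = f xs"
proof (induction k)
  case 0
  then show ?case by simp
next
  case (Suc k)
  have "f (rotate (Suc k) xs) = f (rotate1 (rotate k xs))" by simp
  also have "\<dots> = f (rotate k xs)"
  proof (cases "rotate k xs")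
    case Nil
    then show ?thesis by simp
  next
    case (Cons z w)
    then have "length w + 1 = K" using Suc.prems by (metis length_Cons length_rotate Suc_eq_plus1)
    then show ?thesis using Cons rot by simp
  qed
  finally show ?case using Suc by simp
qed

lemma adj_swap: "length P + 2 + length Q = K \<Longrightarrow> f (P @ x # y # Q) = f (P @ y # x # Q)"
proof -
  assume h: "length P + 2 + length Q = K"
  have "f (P @ x # y # Q) = f (rotate (length P) (P @ x # y # Q))"
    using rot_all[of "P @ x # y # Q" "length P"] h by simp
  also have "\<dots> = f (x # y # Q @ P)" by (simp add: rotate_append)
  also have "\<dots> = f (y # x # Q @ P)" using sw h by simp
  also have "\<dots> = f (rotate (length P) (P @ y # x # Q))" by (simp add: rotate_append)
  also have "\<dots> = f (P @ y # x # Q)"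
    using rot_all[of "P @ y # x # Q" "length P"] h by simp
  finally show ?thesis .
qed

lemma move_front: "length F + length l + 1 + length r = K \<Longrightarrow> f (F @ l @ x # r) = f (F @ x # l @ r)"
proof (induction l arbitrary: F)
  case Nil
  then show ?case by simp
next
  case (Cons c l)
  have "f (F @ (c # l) @ x # r) = f ((F @ [c]) @ l @ x # r)" by simp
  also have "\<dots> = f ((F @ [c]) @ x # l @ r)" using Cons.IH[of "F @ [c]"] Cons.prems by simp
  also have "\<dots> = f (F @ c # x # l @ r)" by simp
  also have "\<dots> = f (F @ x # c # l @ r)" using adj_swap[of F "l @ r" c x] Cons.prems by simp
  finally show ?case by simp
qed

lemma mset_inv: "length F + length xs = K \<Longrightarrow> mset xs = mset ys \<Longrightarrow> f (F @ xs) = f (F @ ys)"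
proof (induction xs arbitrary: F ys)
  case Nil
  then show ?case by simp
next
  case (Cons x xs)
  have "x \<in> set ys" using Cons.prems(2) by (metis list.set_intros(1) set_mset_mset)
  then obtain l r where ys: "ys = l @ x # r" by (metis split_list)
  have m: "mset xs = mset (l @ r)" using Cons.prems(2) ys by simp
  have len: "length ys = length (x # xs)" using Cons.prems(2) by (metis size_mset)
  have "f (F @ x # xs) = f ((F @ [x]) @ xs)" by simp
  also have "\<dots> = f ((F @ [x]) @ (l @ r))" using Cons.IH[of "F @ [x]" "l @ r"] Cons.prems m by simp
  also have "\<dots> = f (F @ l @ x # r)" using move_front[of F l r x] Cons.prems len ys by simp
  finally show ?case using ys by simp
qed

end

lemma mset_map_permutes:
  assumes "\<pi> permutes set L" "distinct L"
  shows "mset (map \<pi> L) = mset L"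
proof -
  have "mset (map \<pi> L) = image_mset \<pi> (mset_set (set L))" using assms(2) by (simp add: mset_set_set)
  also have "\<dots> = mset_set (set L)" using permutes_image_mset[OF assms(1)] .
  also have "\<dots> = mset L" using assms(2) by (simp add: mset_set_set)
  finally show ?thesis .
qed


lemma core_front:
  fixes \<sigma> :: "nat \<Rightarrow> nat" and P Q :: "'a::semigroup_mult list"
  assumes perm: "\<sigma> permutes {1..n}" and sat: "satisfies_perm_id TYPE('a) n \<sigma>"
    and n1: "1 \<le> n"
    and lP: "length P = \<sigma> 1 - 1" and lPQ: "length P + length Q = n"
  shows "wprod (a # P @ Q) = wprod (P @ a # Q)"
proof -
  define i where "i = \<sigma> 1"
  have iin: "i \<in> {1..n}" unfolding i_def using permutes_in_image[OF perm, of 1] n1 by auto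
  define ys where "ys = P @ Q"
  define y where "y = (\<lambda>m. ys ! (m - 1))"
  define y2 where "y2 = y(i := a * y i)"
  have lys: "length ys = n" using lPQ ys_def by simp
  obtain q Q' where Q: "Q = q # Q'" using lP lPQ iin i_def by (cases Q) auto
  have mapy: "map y [1..<n+1] = ys"
    by (rule nth_equalityI) (auto simp: y_def lys simp del: upt_Suc)
  have mapy2: "map y2 [1..<n+1] = P @ (a * q) # Q'"
  proof (rule nth_equalityI)
    show "length (map y2 [1..<n+1]) = length (P @ (a * q) # Q')" using lPQ Q by simp
  next
    fix k assume "k < length (map y2 [1..<n+1])"
    then have k: "k < n" by (simp del: upt_Suc)
    show "map y2 [1..<n+1] ! k = (P @ (a * q) # Q') ! k"
      using k lP iin unfolding y2_def y_def ys_def i_def Q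
      by (auto simp: nth_append nth_Cons split: nat.split simp del: upt_Suc)
  qed
  have inj: "\<sigma> m \<noteq> i" if "m \<in> set [2..<n+1]" for m
  proof
    assume "\<sigma> m = i"
    then have "\<sigma> m = \<sigma> 1" by (simp add: i_def)
    then have "m = 1" using permutes_inj[OF perm] by (auto dest: injD)
    then show False using that by (auto simp del: upt_Suc)
  qed
  have up: "[1..<n+1] = 1 # [2..<n+1]" using upt_conv_Cons[of 1 "n+1"] n1 by (simp add: numeral_2_eq_2 del: upt_Suc)
  have m2: "map (\<lambda>m. y2 (\<sigma> m)) [1..<n+1] = (a * y i) # map (\<lambda>m. y (\<sigma> m)) [2..<n+1]"
    using inj unfolding up y2_def by (auto simp: i_def)
  have m1: "map (\<lambda>m. y (\<sigma> m)) [1..<n+1] = y i # map (\<lambda>m. y (\<sigma> m)) [2..<n+1]"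
    unfolding up by (simp add: i_def)
  have e1: "wprod (map y2 [1..<n+1]) = wprod (map (\<lambda>m. y2 (\<sigma> m)) [1..<n+1])"
    using sat unfolding satisfies_perm_id_def by blast
  have e2: "wprod (map y [1..<n+1]) = wprod (map (\<lambda>m. y (\<sigma> m)) [1..<n+1])"
    using sat unfolding satisfies_perm_id_def by blast
  have "wprod (P @ a # Q) = wprod (map y2 [1..<n+1])"
    using mapy2 Q wprod_merge[of P a q Q'] by simp
  also have "\<dots> = wprod ((a * y i) # map (\<lambda>m. y (\<sigma> m)) [2..<n+1])" using e1 m2 by simp
  also have "\<dots> = a * wprod (y i # map (\<lambda>m. y (\<sigma> m)) [2..<n+1])"
    using wprod_merge[of "[]" a "y i"] by (simp add: wprod_Cons)
  also have "\<dots> = a * wprod ys" using e2 m1 mapy by simp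
  also have "\<dots> = wprod (a # P @ Q)"
  proof -
    have "P @ Q \<noteq> []" using lys n1 ys_def by auto
    then show ?thesis using ys_def wprod_Cons[of "P @ Q" a] by simp
  qed
  finally show ?thesis by simp
qed

lemma core_end:
  fixes \<sigma> :: "nat \<Rightarrow> nat" and P Q :: "'a::semigroup_mult list"
  assumes perm: "\<sigma> permutes {1..n}" and sat: "satisfies_perm_id TYPE('a) n \<sigma>"
    and n1: "1 \<le> n"
    and lP: "length P = \<sigma> n" and lPQ: "length P + length Q = n"
  shows "wprod (P @ Q @ [b]) = wprod (P @ b # Q)"
proof -
  define j where "j = \<sigma> n"
  have jin: "j \<in> {1..n}" unfolding j_def using permutes_in_image[OF perm, of n] n1 by auto
  define ys where "ys = P @ Q"
  define y where "y = (\<lambda>m. ys ! (m - 1))"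
  define y2 where "y2 = y(j := y j * b)"
  have lys: "length ys = n" using lPQ ys_def by simp
  obtain P' p where P: "P = P' @ [p]" using lP jin j_def by (cases P rule: rev_cases) auto
  have mapy: "map y [1..<n+1] = ys"
    by (rule nth_equalityI) (auto simp: y_def lys simp del: upt_Suc)
  have mapy2: "map y2 [1..<n+1] = P' @ (p * b) # Q"
  proof (rule nth_equalityI)
    show "length (map y2 [1..<n+1]) = length (P' @ (p * b) # Q)" using lPQ P by simp
  next
    fix k assume "k < length (map y2 [1..<n+1])"
    then have k: "k < n" by (simp del: upt_Suc)
    show "map y2 [1..<n+1] ! k = (P' @ (p * b) # Q) ! k"
      using k lP jin unfolding y2_def y_def ys_def j_def P
      by (auto simp: nth_append nth_Cons split: nat.split simp del: upt_Suc)
  qed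
  have inj: "\<sigma> m \<noteq> j" if "m \<in> set [1..<n]" for m
  proof
    assume "\<sigma> m = j"
    then have "\<sigma> m = \<sigma> n" by (simp add: j_def)
    then have "m = n" using permutes_inj[OF perm] by (auto dest: injD)
    then show False using that by (auto simp del: upt_Suc)
  qed
  have up: "[1..<n+1] = [1..<n] @ [n]" using n1 by simp
  have m2: "map (\<lambda>m. y2 (\<sigma> m)) [1..<n+1] = map (\<lambda>m. y (\<sigma> m)) [1..<n] @ [y j * b]"
    using inj unfolding up y2_def by (auto simp: j_def)
  have m1: "map (\<lambda>m. y (\<sigma> m)) [1..<n+1] = map (\<lambda>m. y (\<sigma> m)) [1..<n] @ [y j]"
    unfolding up by (simp add: j_def)
  have e1: "wprod (map y2 [1..<n+1]) = wprod (map (\<lambda>m. y2 (\<sigma> m)) [1..<n+1])"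
    using sat unfolding satisfies_perm_id_def by blast
  have e2: "wprod (map y [1..<n+1]) = wprod (map (\<lambda>m. y (\<sigma> m)) [1..<n+1])"
    using sat unfolding satisfies_perm_id_def by blast
  have "wprod (P @ b # Q) = wprod (map y2 [1..<n+1])"
    using mapy2 P wprod_merge[of P' p b Q] by simp
  also have "\<dots> = wprod (map (\<lambda>m. y (\<sigma> m)) [1..<n] @ [y j * b])" using e1 m2 by simp
  also have "\<dots> = wprod ((map (\<lambda>m. y (\<sigma> m)) [1..<n] @ [y j]) @ [b])"
    using wprod_merge[of "map (\<lambda>m. y (\<sigma> m)) [1..<n]" "y j" b "[]"] by simp
  also have "\<dots> = wprod (map (\<lambda>m. y (\<sigma> m)) [1..<n+1]) * b"
    using m1 wprod_append[of "map (\<lambda>m. y (\<sigma> m)) [1..<n] @ [y j]" "[b]"] by (simp del: upt_Suc)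
  also have "\<dots> = wprod ys * b" using e2 mapy by simp
  also have "\<dots> = wprod (P @ Q @ [b])"
  proof -
    have "P @ Q \<noteq> []" using lys n1 ys_def by auto
    then show ?thesis using ys_def wprod_append[of "P @ Q" "[b]"] by simp
  qed
  finally show ?thesis by simp
qed


lemma front_ext:
  fixes \<sigma> :: "nat \<Rightarrow> nat" and P Q :: "'a::semigroup_mult list"
  assumes perm: "\<sigma> permutes {1..n}" and sat: "satisfies_perm_id TYPE('a) n \<sigma>"
    and n1: "1 \<le> n"
    and lP: "length P = \<sigma> 1 - 1" and lPQ: "length P + length Q \<ge> n"
  shows "wprod (a # P @ Q) = wprod (P @ a # Q)"
proof -
  define Q1 where "Q1 = take (n - length P) Q"
  define Q2 where "Q2 = drop (n - length P) Q"
  have Q: "Q = Q1 @ Q2" by (simp add: Q1_def Q2_def)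
  have "length P \<le> n" using lP permutes_in_image[OF perm, of 1] n1 by auto
  then have l1: "length P + length Q1 = n" using lPQ by (auto simp: Q1_def min_def)
  have c: "wprod (a # P @ Q1) = wprod (P @ a # Q1)" using core_front[OF perm sat n1 lP l1] .
  show ?thesis
  proof (cases "Q2 = []")
    case True
    then show ?thesis using c Q by simp
  next
    case False
    have "wprod (a # P @ Q) = wprod ((a # P @ Q1) @ Q2)" using Q by simp
    also have "\<dots> = wprod (a # P @ Q1) * wprod Q2" using False wprod_append[of "a # P @ Q1" Q2] by simp
    also have "\<dots> = wprod (P @ a # Q1) * wprod Q2" using c by simp
    also have "\<dots> = wprod ((P @ a # Q1) @ Q2)" using False wprod_append[of "P @ a # Q1" Q2] by simp
    finally show ?thesis using Q by simp
  qed
qed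

lemma end_ext:
  fixes \<sigma> :: "nat \<Rightarrow> nat" and P Q :: "'a::semigroup_mult list"
  assumes perm: "\<sigma> permutes {1..n}" and sat: "satisfies_perm_id TYPE('a) n \<sigma>"
    and n1: "1 \<le> n"
    and lP: "length P = \<sigma> n" and lPQ: "length P + length Q = n"
  shows "wprod (P @ Q @ b # R) = wprod (P @ b # Q @ R)"
proof -
  have c: "wprod (P @ Q @ [b]) = wprod (P @ b # Q)" using core_end[OF perm sat n1 lP lPQ] .
  show ?thesis
  proof (cases "R = []")
    case True
    then show ?thesis using c by simp
  next
    case False
    have "wprod (P @ Q @ b # R) = wprod ((P @ Q @ [b]) @ R)" by simp
    also have "\<dots> = wprod (P @ Q @ [b]) * wprod R" using False wprod_append[of "P @ Q @ [b]" R] by simp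
    also have "\<dots> = wprod (P @ b # Q) * wprod R" using c by simp
    also have "\<dots> = wprod ((P @ b # Q) @ R)" using False wprod_append[of "P @ b # Q" R] by simp
    finally show ?thesis by simp
  qed
qed

lemma basic_facts:
  fixes \<sigma> :: "nat \<Rightarrow> nat"
  assumes perm: "\<sigma> permutes {1..n}" and s1: "\<sigma> 1 \<noteq> 1"
  shows "1 \<le> n" "\<sigma> 1 \<in> {1..n}" "\<sigma> n \<in> {1..n}"
proof -
  show n1: "1 \<le> n"
  proof (rule ccontr)
    assume "\<not> 1 \<le> n"
    then have "\<sigma> 1 = 1" using permutes_not_in[OF perm, of 1] by simp
    then show False using s1 by simp
  qed
  show "\<sigma> 1 \<in> {1..n}" using permutes_in_image[OF perm, of 1] n1 by auto
  show "\<sigma> n \<in> {1..n}" using permutes_in_image[OF perm, of n] n1 by auto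
qed

lemma prefix_rot:
  fixes \<sigma> :: "nat \<Rightarrow> nat" and B w :: "'a::semigroup_mult list"
  assumes perm: "\<sigma> permutes {1..n}" and sat: "satisfies_perm_id TYPE('a) n \<sigma>"
    and n1: "1 \<le> n" and i2: "2 \<le> \<sigma> 1" and iin: "\<sigma> 1 \<le> n"
    and lB: "length B = n + 1 - \<sigma> 1" and lw: "length w + 1 = \<sigma> 1 + 1"
  shows "wprod ((z # w) @ B) = wprod ((w @ [z]) @ B)"
proof -
  obtain u v w' where w: "w = u # v # w'" using lw i2 len2[of w] by auto
  have lw': "length ((u * v) # w') = \<sigma> 1 - 1" using lw w by simp
  have "wprod ((z # w) @ B) = wprod ([z] @ (u * v) # (w' @ B))"
    using wprod_merge[of "[z]" u v "w' @ B"] w by simp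
  also have "\<dots> = wprod (((u * v) # w') @ z # B)"
    using front_ext[OF perm sat n1 lw', of B z] lB iin lw w by simp
  also have "\<dots> = wprod ((w @ [z]) @ B)"
    using wprod_merge[of "[]" u v "w' @ z # B"] w by simp
  finally show ?thesis .
qed

lemma prefix_D:
  fixes \<sigma> :: "nat \<Rightarrow> nat" and B m :: "'a::semigroup_mult list"
  assumes perm: "\<sigma> permutes {1..n}" and sat: "satisfies_perm_id TYPE('a) n \<sigma>"
    and n1: "1 \<le> n" and iin: "\<sigma> 1 \<le> n"
    and lB: "length B = n + 1 - \<sigma> 1" and lm: "length m = \<sigma> 1 - 1"
  shows "wprod ((x # m @ [y]) @ B) = wprod ((m @ [x, y]) @ B)"
  using front_ext[OF perm sat n1 lm, of "y # B" x] lB iin lm by simp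

lemma prefix_eq:
  fixes \<sigma> :: "nat \<Rightarrow> nat" and a :: "nat \<Rightarrow> 'a::semigroup_mult"
  assumes perm: "\<sigma> permutes {1..n}" and sat: "satisfies_perm_id TYPE('a) n \<sigma>"
    and s1: "\<sigma> 1 \<noteq> 1" and pi: "\<pi> permutes {1..\<sigma> 1 + 1}"
  shows "wprod (map a [1..<n + 2 + 1]) = wprod (map (\<lambda>m. a (\<pi> m)) [1..<n + 2 + 1])"
proof -
  note bf = basic_facts[OF perm s1]
  define i where "i = \<sigma> 1"
  have n1: "1 \<le> n" using bf by simp
  have iin: "i \<in> {1..n}" using bf i_def by simp
  have i2: "2 \<le> i" using iin s1 i_def by auto
  define L where "L = [1..<i+2]"
  define B where "B = map a [i+2..<n+3]"
  have split: "[1..<n + 2 + 1] = L @ [i+2..<n+3]" unfolding L_def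
    using upt_add_eq_append[of 1 "i+2" "n+1-i"] iin by (simp add: numeral_3_eq_3 del: upt_Suc)
  have fix2: "map (\<lambda>m. a (\<pi> m)) [i+2..<n+3] = map a [i+2..<n+3]"
    using permutes_not_in[OF pi[folded i_def]] by auto
  have lB: "length B = n + 1 - \<sigma> 1" by (simp add: B_def i_def)
  define f where "f = (\<lambda>xs. wprod (xs @ B))"
  have rot: "f (z # w) = f (w @ [z])" if lw: "length w + 1 = i + 1" for z w
    using prefix_rot[OF perm sat n1, of B w z] i2 iin lB lw unfolding f_def i_def by simp
  have D: "f (x # m @ [y]) = f (m @ [x, y])" if lm: "length m = i - 1" for x y m
    using prefix_D[OF perm sat n1, of B m x y] iin lB lm unfolding f_def i_def by simp
  have sw: "f (x # y # m) = f (y # x # m)" if lm: "length m + 2 = i + 1" for x y m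
  proof -
    have "f (x # y # m) = f (y # m @ [x])" using rot[of "y # m" x] lm by simp
    also have "\<dots> = f (m @ [y, x])" using D[of m y x] lm by simp
    also have "\<dots> = f (x # m @ [y])" using rot[of "m @ [y]" x] lm by simp
    also have "\<dots> = f (y # x # m)" using rot[of "x # m" y] lm by simp
    finally show ?thesis .
  qed
  have sL: "set L = {1..i+1}" unfolding L_def by (auto simp del: upt_Suc)
  have dL: "distinct L" by (simp add: L_def del: upt_Suc)
  have "mset (map \<pi> L) = mset L"
    using mset_map_permutes[of \<pi> L] pi sL dL i_def by simp
  then have "mset (map a (map \<pi> L)) = mset (map a L)" by (metis mset_map)
  then have ms: "mset (map (\<lambda>m. a (\<pi> m)) L) = mset (map a L)" by (simp only: map_map comp_def)
  have "f (map a L) = f (map (\<lambda>m. a (\<pi> m)) L)"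
    using mset_inv[where f=f and K="i + 1", OF rot sw, of "[]" "map a L" "map (\<lambda>m. a (\<pi> m)) L"] ms
    by (simp add: L_def)
  then show ?thesis unfolding split map_append fix2 by (simp only: f_def B_def)
qed

lemma suffix_rot:
  fixes \<sigma> :: "nat \<Rightarrow> nat" and B w :: "'a::semigroup_mult list"
  assumes perm: "\<sigma> permutes {1..n}" and sat: "satisfies_perm_id TYPE('a) n \<sigma>"
    and n1: "1 \<le> n" and jn: "\<sigma> n < n"
    and lB: "length B = \<sigma> n" and lw: "length w + 1 = n + 2 - \<sigma> n"
  shows "wprod (B @ z # w) = wprod (B @ w @ [z])"
proof -
  have "2 \<le> length w" using lw jn by linarith
  then obtain u v w' where w: "w = u # v # w'" using len2[of w] by auto
  have lQ: "length B + length ((u * v) # w') = n" using lw w lB jn by simp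
  have "wprod (B @ w @ [z]) = wprod (B @ ((u * v) # w') @ z # [])"
    using wprod_merge[of B u v "w' @ [z]"] w by simp
  also have "\<dots> = wprod (B @ z # ((u * v) # w') @ [])"
    using end_ext[OF perm sat n1 lB lQ, of z "[]"] by simp
  also have "\<dots> = wprod ((B @ [z]) @ (u * v) # w')" by simp
  also have "\<dots> = wprod (B @ z # w)"
    using wprod_merge[of "B @ [z]" u v w'] w by simp
  finally show ?thesis by simp
qed

lemma suffix_E:
  fixes \<sigma> :: "nat \<Rightarrow> nat" and B l :: "'a::semigroup_mult list"
  assumes perm: "\<sigma> permutes {1..n}" and sat: "satisfies_perm_id TYPE('a) n \<sigma>"
    and n1: "1 \<le> n" and jn: "\<sigma> n < n"
    and lB: "length B = \<sigma> n" and ll: "length l = n - \<sigma> n"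
  shows "wprod (B @ l @ [x, y]) = wprod (B @ x # l @ [y])"
  using end_ext[OF perm sat n1 lB, of l x "[y]"] ll lB jn by simp

lemma suffix_eq:
  fixes \<sigma> :: "nat \<Rightarrow> nat" and a :: "nat \<Rightarrow> 'a::semigroup_mult"
  assumes perm: "\<sigma> permutes {1..n}" and sat: "satisfies_perm_id TYPE('a) n \<sigma>"
    and s1: "\<sigma> 1 \<noteq> 1" and sn: "\<sigma> n \<noteq> n" and pi: "\<pi> permutes {\<sigma> n + 1..n + 2}"
  shows "wprod (map a [1..<n + 2 + 1]) = wprod (map (\<lambda>m. a (\<pi> m)) [1..<n + 2 + 1])"
proof -
  note bf = basic_facts[OF perm s1]
  define j where "j = \<sigma> n"
  have n1: "1 \<le> n" using bf by simp
  have jin: "j \<in> {1..n}" using bf j_def by simp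
  have jn: "j < n" using jin sn j_def by auto
  define L where "L = [j+1..<n+3]"
  define B where "B = map a [1..<j+1]"
  have split: "[1..<n + 2 + 1] = [1..<j+1] @ L" unfolding L_def
    using upt_add_eq_append[of 1 "j+1" "n+2-j"] jin by (simp add: numeral_3_eq_3 del: upt_Suc)
  have fix2: "map (\<lambda>m. a (\<pi> m)) [1..<j+1] = map a [1..<j+1]"
    using permutes_not_in[OF pi[folded j_def]] by auto
  have lB: "length B = \<sigma> n" by (simp add: B_def j_def)
  define f where "f = (\<lambda>xs. wprod (B @ xs))"
  have rot: "f (z # w) = f (w @ [z])" if lw: "length w + 1 = n + 2 - j" for z w
    using suffix_rot[OF perm sat n1, of B w z] jn lB lw unfolding f_def j_def by simp
  have E: "f (l @ [x, y]) = f (x # l @ [y])" if ll: "length l = n - j" for x y l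
    using suffix_E[OF perm sat n1, of B l x y] jn lB ll unfolding f_def j_def by simp
  have sw: "f (x # y # m) = f (y # x # m)" if lm: "length m + 2 = n + 2 - j" for x y m
  proof -
    have "f (x # y # m) = f (y # m @ [x])" using rot[of "y # m" x] lm by simp
    also have "\<dots> = f (m @ [x, y])" using rot[of "m @ [x]" y] lm by simp
    also have "\<dots> = f (x # m @ [y])" using E[of m x y] lm jn by simp
    also have "\<dots> = f (y # x # m)" using rot[of "x # m" y] lm by simp
    finally show ?thesis .
  qed
  have sL: "set L = {j+1..n+2}" unfolding L_def by (auto simp del: upt_Suc)
  have dL: "distinct L" by (simp add: L_def del: upt_Suc)
  have "mset (map \<pi> L) = mset L"
    using mset_map_permutes[of \<pi> L] pi sL dL j_def by simp
  then have "mset (map a (map \<pi> L)) = mset (map a L)" by (metis mset_map)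
  then have ms: "mset (map (\<lambda>m. a (\<pi> m)) L) = mset (map a L)" by (simp only: map_map comp_def)
  have "f (map a L) = f (map (\<lambda>m. a (\<pi> m)) L)"
    using mset_inv[where f=f and K="n + 2 - j", OF rot sw, of "[]" "map a L" "map (\<lambda>m. a (\<pi> m)) L"] ms jn
    by (simp add: L_def)
  then show ?thesis unfolding split map_append fix2 by (simp only: f_def B_def)
qed

theorem lemma2p10:
  fixes scale :: "'k::field \<Rightarrow> 'a::ring \<Rightarrow> 'a"
    and n :: nat and \<sigma> :: "nat \<Rightarrow> nat"
  assumes "assoc_algebra scale"
    and "\<sigma> permutes {1..n}"
    and "satisfies_perm_id TYPE('a) n \<sigma>"
    and "\<sigma> 1 \<noteq> 1"
    and "\<sigma> n \<noteq> n"
  shows "(\<forall>\<pi>. \<pi> permutes {1..\<sigma> 1 + 1} \<longrightarrow> \<pi> \<in> H TYPE('a) (n + 2))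
       \<and> (\<forall>\<pi>. \<pi> permutes {\<sigma> n + 1..n + 2} \<longrightarrow> \<pi> \<in> H TYPE('a) (n + 2))"
proof -
  note bf = basic_facts[OF assms(2) assms(4)]
  have p1: "\<pi> \<in> H TYPE('a) (n + 2)" if pi: "\<pi> permutes {1..\<sigma> 1 + 1}" for \<pi>
  proof -
    have "\<pi> permutes {1..n+2}" using permutes_subset[OF pi] bf by auto
    moreover have "\<forall>a :: nat \<Rightarrow> 'a. wprod (map a [1..<n + 2 + 1]) = wprod (map (\<lambda>m. a (\<pi> m)) [1..<n + 2 + 1])"
      using prefix_eq[OF assms(2) assms(3) assms(4) pi] by blast
    ultimately show ?thesis unfolding H_def satisfies_perm_id_def by blast
  qed
  have p2: "\<pi> \<in> H TYPE('a) (n + 2)" if pi: "\<pi> permutes {\<sigma> n + 1..n + 2}" for \<pi>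
  proof -
    have "\<pi> permutes {1..n+2}" using permutes_subset[OF pi] by auto
    moreover have "\<forall>a :: nat \<Rightarrow> 'a. wprod (map a [1..<n + 2 + 1]) = wprod (map (\<lambda>m. a (\<pi> m)) [1..<n + 2 + 1])"
      using suffix_eq[OF assms(2) assms(3) assms(4) assms(5) pi] by blast
    ultimately show ?thesis unfolding H_def satisfies_perm_id_def by blast
  qed
  show ?thesis using p1 p2 by blast
qed

end
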